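(* Let $X$ be a peripherally Hausdorff space and let $f:X\to X$ be a continuous weak+ topological contraction. Then $f$ has a unique fixed point.
   Context: For $x\in X$, $[x]:=\bigcap\{\overline{U}:U \text{ an open neighbourhood of } x\}$. A space is $0$-Hausdorff if it is Hausdorff; for an ordinal $\alpha>0$, a $T_1$ space $X$ is $\alpha$-Hausdorff if for every $x\in X$ the subspace $[x]$ is $\beta_x$-Hausdorff for some ordinal $\beta_x<\alpha$; $X$ is peripherally Hausdorff if it is $\alpha$-Hausdorff for some ordinal $\alpha$. A mapping $f:X\to X$ is a weak+ topological contraction if for every open cover $\mathcal{U}$ of $X$ and every pair of points $x,y\in X$ there exist $n_0\in\mathbb{N}_0$ and $U\in\mathcal{U}$ such that $f^n[\{x,y\}]\subseteq U$ for all $n\ge n_0$ ($f^n$ the $n$-fold iterate). *)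

theory Defs
  imports "HOL-Analysis.Analysis"
begin

text \<open>The set [x]: intersection of the closures of all open neighbourhoods of x.\<close>
definition nbhd_closure_core :: "'a topology \<Rightarrow> 'a \<Rightarrow> 'a set" where
  "nbhd_closure_core X x = \<Inter> {X closure_of U | U. openin X U \<and> x \<in> U}"

text \<open>Peripherally Hausdorff = alpha-Hausdorff for some ordinal alpha; the union over all
  ordinals of the classes of alpha-Hausdorff spaces is the least class closed under the
  two rules below (transfinite iteration of a monotone operator).\<close>
inductive peripherally_Hausdorff :: "'a topology \<Rightarrow> bool" where
  zero: "Hausdorff_space X \<Longrightarrow> peripherally_Hausdorff X"
| step: "t1_space X \<Longrightarrow>
          (\<forall>x\<in>topspace X. peripherally_Hausdorff (subtopology X (nbhd_closure_core X x))) \<Longrightarrow>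
          peripherally_Hausdorff X"

definition weak_plus_contraction :: "'a topology \<Rightarrow> ('a \<Rightarrow> 'a) \<Rightarrow> bool" where
  "weak_plus_contraction X f \<longleftrightarrow>
     (\<forall>\<U>. (\<forall>U\<in>\<U>. openin X U) \<and> topspace X \<subseteq> \<Union>\<U> \<longrightarrow>
        (\<forall>x\<in>topspace X. \<forall>y\<in>topspace X.
           \<exists>n0::nat. \<exists>U\<in>\<U>. \<forall>n\<ge>n0. (f ^^ n) ` {x, y} \<subseteq> U))"

end

theory Submission
  imports Defs
begin

lemma funpow_in: "f ` L \<subseteq> L \<Longrightarrow> x \<in> L \<Longrightarrow> (f^^n) x \<in> L"
  by (induction n) auto

lemma limit_set:
  assumes ne: "topspace Y \<noteq> {}" and cont: "continuous_map Y Y f"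
    and wp: "weak_plus_contraction Y f"
  obtains L where "L \<subseteq> topspace Y" "L \<noteq> {}" "f ` L \<subseteq> L"
    "continuous_map (subtopology Y L) (subtopology Y L) f"
    "weak_plus_contraction (subtopology Y L) f"
    "\<And>q q' U V. q \<in> L \<Longrightarrow> q' \<in> L \<Longrightarrow> openin Y U \<Longrightarrow> openin Y V \<Longrightarrow> q \<in> U \<Longrightarrow> q' \<in> V
       \<Longrightarrow> U \<inter> V \<noteq> {}"
proof -
  obtain x0 where x0: "x0 \<in> topspace Y" using ne by blast
  have orb: "(f^^n) x0 \<in> topspace Y" for n
    using funpow_in[of f "topspace Y" x0 n] cont x0 by (auto simp: continuous_map_def)
  define ev where "ev U \<longleftrightarrow> (\<exists>n0. \<forall>n\<ge>n0. (f^^n) x0 \<in> U)" for U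
  define L where "L = {q \<in> topspace Y. \<forall>U. openin Y U \<and> q \<in> U \<longrightarrow> ev U}"
  have Lsub: "L \<subseteq> topspace Y" unfolding L_def by blast
  have Lne: "L \<noteq> {}"
  proof
    assume L0: "L = {}"
    define \<U> where "\<U> = {U. openin Y U \<and> \<not> ev U}"
    have "topspace Y \<subseteq> \<Union>\<U>"
    proof
      fix q assume q: "q \<in> topspace Y"
      then have "q \<notin> L" using L0 by blast
      then obtain U where "openin Y U" "q \<in> U" "\<not> ev U" using q unfolding L_def by blast
      then show "q \<in> \<Union>\<U>" unfolding \<U>_def by blast
    qed
    moreover have "\<forall>U\<in>\<U>. openin Y U" unfolding \<U>_def by blast
    ultimately obtain n0 U where U: "U \<in> \<U>" "\<forall>n\<ge>n0. (f ^^ n) ` {x0, x0} \<subseteq> U"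
      using wp x0 unfolding weak_plus_contraction_def by meson
    then have "ev U" unfolding ev_def by auto
    then show False using U(1) unfolding \<U>_def by blast
  qed
  have inv: "f ` L \<subseteq> L"
  proof
    fix z assume "z \<in> f ` L"
    then obtain q where q: "q \<in> L" "z = f q" by blast
    have zt: "z \<in> topspace Y" using q Lsub cont by (auto simp: continuous_map_def)
    have "ev U" if U: "openin Y U" "z \<in> U" for U
    proof -
      have "openin Y {x \<in> topspace Y. f x \<in> U}"
        using openin_continuous_map_preimage[OF cont U(1)] .
      moreover have "q \<in> {x \<in> topspace Y. f x \<in> U}" using q U Lsub by auto
      ultimately have "ev {x \<in> topspace Y. f x \<in> U}" using q(1) unfolding L_def by blast
      then obtain n0 where n0: "\<forall>n\<ge>n0. (f^^n) x0 \<in> {x \<in> topspace Y. f x \<in> U}"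
        unfolding ev_def by blast
      have "\<forall>n\<ge>Suc n0. (f^^n) x0 \<in> U"
      proof (intro allI impI)
        fix n assume "Suc n0 \<le> n"
        then obtain m where m: "n = Suc m" "m \<ge> n0" by (cases n) auto
        then show "(f^^n) x0 \<in> U" using n0 by auto
      qed
      then show ?thesis unfolding ev_def by blast
    qed
    then show "z \<in> L" using zt unfolding L_def by blast
  qed
  have sep: "U \<inter> V \<noteq> {}" if "q \<in> L" "q' \<in> L" "openin Y U" "openin Y V" "q \<in> U" "q' \<in> V"
    for q q' U V
  proof -
    have "ev U" "ev V" using that unfolding L_def by blast+
    then obtain n1 n2 where "\<forall>n\<ge>n1. (f^^n) x0 \<in> U" "\<forall>n\<ge>n2. (f^^n) x0 \<in> V"
      unfolding ev_def by blast
    then have "(f^^(max n1 n2)) x0 \<in> U \<inter> V" by auto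
    then show ?thesis by blast
  qed
  have compl: "topspace Y - L = \<Union>{U. openin Y U \<and> \<not> ev U}"
  proof
    show "topspace Y - L \<subseteq> \<Union>{U. openin Y U \<and> \<not> ev U}"
      unfolding L_def by blast
    show "\<Union>{U. openin Y U \<and> \<not> ev U} \<subseteq> topspace Y - L"
      unfolding L_def using openin_subset by blast
  qed
  have copen: "openin Y (topspace Y - L)"
    unfolding compl by (rule openin_Union) blast
  have contL: "continuous_map (subtopology Y L) (subtopology Y L) f"
    unfolding continuous_map_in_subtopology
    using continuous_map_from_subtopology[OF cont] inv Lsub by auto
  have wpL: "weak_plus_contraction (subtopology Y L) f"
    unfolding weak_plus_contraction_def
  proof (intro allI impI ballI)
    fix \<U> x y
    assume H: "(\<forall>U\<in>\<U>. openin (subtopology Y L) U) \<and> topspace (subtopology Y L) \<subseteq> \<Union> \<U>"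
      and x: "x \<in> topspace (subtopology Y L)" and y: "y \<in> topspace (subtopology Y L)"
    have tL: "topspace (subtopology Y L) = L" using Lsub by auto
    define \<V> where "\<V> = {V. openin Y V \<and> V \<inter> L \<in> \<U>} \<union> {topspace Y - L}"
    have "\<forall>V\<in>\<V>. openin Y V" unfolding \<V>_def using copen by blast
    moreover have "topspace Y \<subseteq> \<Union>\<V>"
    proof
      fix z assume z: "z \<in> topspace Y"
      show "z \<in> \<Union>\<V>"
      proof (cases "z \<in> L")
        case True
        then obtain U where U: "U \<in> \<U>" "z \<in> U" using H tL by blast
        then obtain V where "openin Y V" "U = V \<inter> L"
          using H openin_subtopology by metis
        then show ?thesis unfolding \<V>_def using U by blast
      next
        case False then show ?thesis unfolding \<V>_def using z by blast
      qed
    qed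
    moreover have xy: "x \<in> topspace Y" "y \<in> topspace Y" using x y Lsub tL by auto
    ultimately obtain n0 W where W: "W \<in> \<V>" "\<forall>n\<ge>n0. (f ^^ n) ` {x, y} \<subseteq> W"
      using wp unfolding weak_plus_contraction_def by meson
    have inL: "(f^^n) x \<in> L" "(f^^n) y \<in> L" for n
      using funpow_in[OF inv] x y tL by auto
    have "W \<noteq> topspace Y - L"
    proof
      assume "W = topspace Y - L"
      then show False using W(2) inL(1)[of n0] by auto
    qed
    then have "openin Y W \<and> W \<inter> L \<in> \<U>" using W(1) unfolding \<V>_def by blast
    moreover have "\<forall>n\<ge>n0. (f ^^ n) ` {x, y} \<subseteq> W \<inter> L" using W(2) inL by auto
    ultimately show "\<exists>n0. \<exists>U\<in>\<U>. \<forall>n\<ge>n0. (f ^^ n) ` {x, y} \<subseteq> U" by blast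
  qed
  show ?thesis using that Lsub Lne inv contL wpL sep by blast
qed

lemma ph_fixed:
  assumes "peripherally_Hausdorff X"
  shows "\<forall>S f. S \<subseteq> topspace X \<and> S \<noteq> {} \<and>
     continuous_map (subtopology X S) (subtopology X S) f \<and>
     weak_plus_contraction (subtopology X S) f \<longrightarrow> (\<exists>x\<in>S. f x = x)"
  using assms
proof (induction rule: peripherally_Hausdorff.induct)
  case (zero X)
  show ?case
  proof (intro allI impI)
    fix S f
    assume A: "S \<subseteq> topspace X \<and> S \<noteq> {} \<and>
     continuous_map (subtopology X S) (subtopology X S) f \<and>
     weak_plus_contraction (subtopology X S) f"
    have tS: "topspace (subtopology X S) = S" using A by auto
    obtain L where L: "L \<subseteq> topspace (subtopology X S)" "L \<noteq> {}" "f ` L \<subseteq> L"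
      "continuous_map (subtopology (subtopology X S) L) (subtopology (subtopology X S) L) f"
      "weak_plus_contraction (subtopology (subtopology X S) L) f"
      "\<And>q q' U V. q \<in> L \<Longrightarrow> q' \<in> L \<Longrightarrow> openin (subtopology X S) U \<Longrightarrow> openin (subtopology X S) V
        \<Longrightarrow> q \<in> U \<Longrightarrow> q' \<in> V \<Longrightarrow> U \<inter> V \<noteq> {}"
      by (rule limit_set[of "subtopology X S" f]) (use A tS in auto)
    have H: "Hausdorff_space (subtopology X S)" using zero.hyps by (rule Hausdorff_space_subtopology)
    obtain p where p: "p \<in> L" using L by blast
    have "f p \<in> L" using p L by blast
    have "f p = p"
    proof (rule ccontr)
      assume "f p \<noteq> p"
      moreover have "f p \<in> topspace (subtopology X S)" "p \<in> topspace (subtopology X S)"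
        using \<open>f p \<in> L\<close> p L(1) by auto
      ultimately obtain U V where "openin (subtopology X S) U" "openin (subtopology X S) V"
        "f p \<in> U" "p \<in> V" "disjnt U V"
        using H unfolding Hausdorff_space_def by metis
      then show False using L(6)[OF \<open>f p \<in> L\<close> p] by (auto simp: disjnt_def)
    qed
    then show "\<exists>x\<in>S. f x = x" using p L(1) tS by auto
  qed
next
  case (step X)
  show ?case
  proof (intro allI impI)
    fix S f
    assume A: "S \<subseteq> topspace X \<and> S \<noteq> {} \<and>
     continuous_map (subtopology X S) (subtopology X S) f \<and>
     weak_plus_contraction (subtopology X S) f"
    have tS: "topspace (subtopology X S) = S" using A by auto
    obtain L where L: "L \<subseteq> topspace (subtopology X S)" "L \<noteq> {}" "f ` L \<subseteq> L"
      "continuous_map (subtopology (subtopology X S) L) (subtopology (subtopology X S) L) f"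
      "weak_plus_contraction (subtopology (subtopology X S) L) f"
      "\<And>q q' U V. q \<in> L \<Longrightarrow> q' \<in> L \<Longrightarrow> openin (subtopology X S) U \<Longrightarrow> openin (subtopology X S) V
        \<Longrightarrow> q \<in> U \<Longrightarrow> q' \<in> V \<Longrightarrow> U \<inter> V \<noteq> {}"
      by (rule limit_set[of "subtopology X S" f]) (use A tS in auto)
    obtain p where p: "p \<in> L" using L by blast
    have LS: "L \<subseteq> S" using L(1) tS by auto
    have sub: "subtopology (subtopology X S) L = subtopology X L"
      using LS by (simp add: subtopology_subtopology Int_absorb1 Int_absorb2)
    have Lcore: "L \<subseteq> nbhd_closure_core X p"
    proof
      fix q assume q: "q \<in> L"
      have "q \<in> X closure_of U" if U: "openin X U" "p \<in> U" for U
        unfolding in_closure_of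
      proof (intro conjI allI impI)
        show "q \<in> topspace X" using q LS A by auto
        fix T assume T: "q \<in> T \<and> openin X T"
        have "openin (subtopology X S) (T \<inter> S)" "openin (subtopology X S) (U \<inter> S)"
          using T U openin_subtopology by blast+
        then have "(U \<inter> S) \<inter> (T \<inter> S) \<noteq> {}"
          using L(6)[OF p q] p q LS T U by blast
        then show "\<exists>y. y \<in> U \<and> y \<in> T" by blast
      qed
      then show "q \<in> nbhd_closure_core X p" unfolding nbhd_closure_core_def by blast
    qed
    have pt: "p \<in> topspace X" using p LS A by auto
    have sub2: "subtopology (subtopology X (nbhd_closure_core X p)) L = subtopology X L"
      using Lcore by (simp add: subtopology_subtopology Int_absorb1 Int_absorb2)
    have "L \<subseteq> topspace (subtopology X (nbhd_closure_core X p))"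
      using Lcore LS A by auto
    moreover have "L \<noteq> {}" using L(2) .
    moreover have "continuous_map (subtopology (subtopology X (nbhd_closure_core X p)) L)
       (subtopology (subtopology X (nbhd_closure_core X p)) L) f"
      using L(4) unfolding sub sub2 .
    moreover have "weak_plus_contraction (subtopology (subtopology X (nbhd_closure_core X p)) L) f"
      using L(5) unfolding sub sub2 .
    ultimately have "\<exists>x\<in>L. f x = x"
      using step.IH pt by blast
    then show "\<exists>x\<in>S. f x = x" using LS by blast
  qed
qed

lemma ph_t1: "peripherally_Hausdorff X \<Longrightarrow> t1_space X"
  by (cases rule: peripherally_Hausdorff.cases) (auto simp: Hausdorff_imp_t1_space)

theorem theorem23:
  fixes X :: "'a topology" and f :: "'a \<Rightarrow> 'a"
  assumes "topspace X \<noteq> {}"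
    and "peripherally_Hausdorff X"
    and "continuous_map X X f"
    and "weak_plus_contraction X f"
  shows "\<exists>!x. x \<in> topspace X \<and> f x = x"
proof -
  obtain x where x: "x \<in> topspace X" "f x = x"
    using ph_fixed[OF assms(2), rule_format, of "topspace X" f] assms by auto
  have t1: "t1_space X" using ph_t1 assms(2) by blast
  have uniq: "y = x" if y: "y \<in> topspace X" "f y = y" for y
  proof (rule ccontr)
    assume ne: "y \<noteq> x"
    define \<U> where "\<U> = {topspace X - {x}, topspace X - {y}}"
    have "\<forall>U\<in>\<U>. openin X U" unfolding \<U>_def using t1 x y
      by (simp add: openin_diff t1_space_closedin_singleton)
    moreover have "topspace X \<subseteq> \<Union>\<U>" unfolding \<U>_def using ne by auto
    ultimately obtain n0 U where U: "U \<in> \<U>" "\<forall>n\<ge>n0. (f ^^ n) ` {x, y} \<subseteq> U"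
      using assms(4) x y unfolding weak_plus_contraction_def by meson
    have "(f ^^ n0) x = x" "(f ^^ n0) y = y"
      using x y by (induction n0) auto
    then have "{x, y} \<subseteq> U" using U(2) by (metis image_empty image_insert order_refl)
    then show False using U(1) unfolding \<U>_def by auto
  qed
  show ?thesis using x uniq by blast
qed

end
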